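(* Let $q\geq 2$, $d_1\geq 1$, $d_2\geq 1$ be integers with $\gcd(d_1,d_2)=1$. Then there exists an integer $c$ with $\gcd(c,q-1)=1$ and \[ \gcd(cd_1-d_2,\,q-1)=\begin{cases}2 & \text{if } q,\ d_1,\ d_2 \text{ are all odd},\\ 1 & \text{otherwise}.\end{cases} \] *)

theory Defs
  imports Main
begin

end

theory Submission
  imports Defs "HOL-Computational_Algebra.Primes"
begin

lemma cop_shift: "coprime (a + m * t) (m::int) \<longleftrightarrow> coprime a m"
proof -
  have "gcd m (t * m + a) = gcd m a" by (rule gcd_add_mult)
  thus ?thesis by (simp add: coprime_iff_gcd_eq_1 gcd.commute ac_simps)
qed

lemma cop_prime: "prime (p::int) \<Longrightarrow> coprime x p \<longleftrightarrow> \<not> p dvd x"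
proof
  assume "prime p" "coprime x p"
  thus "\<not> p dvd x" using coprime_common_divisor[of x p p] not_prime_unit by auto
next
  assume "prime p" "\<not> p dvd x"
  thus "coprime x p" using prime_imp_coprime coprime_commute by blast
qed

lemma lemA:
  fixes m d1 d2 :: int
  assumes "0 < m" "odd m" "coprime d1 d2"
  shows "\<exists>c. coprime c m \<and> coprime (c*d1 - d2) m"
  using assms(1,2)
proof (induction "nat m" arbitrary: m rule: less_induct)
  case less
  show ?case
  proof (cases "m = 1")
    case True thus ?thesis by auto
  next
    case False
    with less.prems have "\<not> is_unit m" "m \<noteq> 0" by auto
    then obtain p where p: "p dvd m" "prime p" using prime_divisor_exists by blast
    then obtain m' where mm: "m = p * m'" by (auto elim: dvdE)
    have p2: "p \<ge> 2" using p(2) prime_ge_2_int by blast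
    have pos: "m' > 0" using less.prems(1) mm p2 by (simp add: zero_less_mult_iff)
    have lt: "m' < m" using mm p2 pos by (simp add: mult_strict_right_mono)
    have oddm': "odd m'" using less.prems(2) mm by auto
    have oddp: "odd p" using less.prems(2) mm by auto
    obtain c' where c': "coprime c' m'" "coprime (c'*d1 - d2) m'"
      using less.hyps[of m'] lt pos oddm' by auto
    show ?thesis
    proof (cases "p dvd m'")
      case True
      have "\<not> p dvd c'" "\<not> p dvd (c'*d1 - d2)"
        using c' True coprime_common_divisor not_prime_unit p(2) by blast+
      hence "coprime c' p" "coprime (c'*d1 - d2) p" using cop_prime p(2) by auto
      thus ?thesis using c' mm by auto
    next
      case False
      have cpm: "coprime p m'" using False p(2) prime_imp_coprime by blast
      define cp where "cp = (if p dvd d1 then 1 else if p dvd (d1 - d2) then 2 else (1::int))"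
      have np1: "\<not> p dvd 1" using p(2) by (meson not_prime_unit)
      have np2: "\<not> p dvd 2"
      proof
        assume "p dvd 2"
        then have "p \<le> 2" by (simp add: zdvd_imp_le)
        with p2 oddp show False by auto
      qed
      have cp1: "\<not> p dvd cp" using np1 np2 cp_def by auto
      have cp2: "\<not> p dvd (cp*d1 - d2)"
      proof (cases "p dvd d1")
        case True
        have "\<not> p dvd d2"
          using True assms(3) p(2) by (meson coprime_common_divisor not_prime_unit)
        moreover have "p dvd d2" if h: "p dvd (d1 - d2)"
        proof -
          have "p dvd d1 - (d1 - d2)" using True h by (rule dvd_diff)
          thus ?thesis by simp
        qed
        ultimately show ?thesis using True cp_def by auto
      next
        case nd1: False
        show ?thesis
        proof (cases "p dvd (d1 - d2)")
          case True
          have "p dvd d1" if h: "p dvd (2*d1 - d2)"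
          proof -
            have "p dvd (2*d1 - d2) - (d1 - d2)" using h True by (rule dvd_diff)
            thus ?thesis by simp
          qed
          then show ?thesis using nd1 True cp_def by auto
        next
          case False then show ?thesis using nd1 cp_def by auto
        qed
      qed
      obtain u v where uv: "u * p + v * m' = 1"
        using bezout_int[of p m'] cpm by (auto simp: coprime_iff_gcd_eq_1)
      define c where "c = cp * v * m' + c' * u * p"
      have vm: "v * m' = 1 - u * p" and up: "u * p = 1 - v * m'" using uv by linarith+
      have "c = cp * (v * m') + c' * u * p" unfolding c_def by (simp add: ac_simps)
      also have "\<dots> = cp * (1 - u * p) + c' * u * p" by (simp only: vm)
      finally have e1: "c = cp + p * (u * (c' - cp))" by (simp add: algebra_simps)
      have "c = cp * v * m' + c' * (u * p)" unfolding c_def by (simp add: ac_simps)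
      also have "\<dots> = cp * v * m' + c' * (1 - v * m')" by (simp only: up)
      finally have e2: "c = c' + m' * (v * (cp - c'))" by (simp add: algebra_simps)
      have "coprime c p" unfolding e1 cop_shift using cp1 cop_prime p(2) by auto
      moreover have "coprime (c*d1 - d2) p"
      proof -
        have "c*d1 - d2 = (cp*d1 - d2) + p * (u * (c' - cp) * d1)" by (subst e1) (simp add: algebra_simps)
        hence "coprime (c*d1 - d2) p \<longleftrightarrow> coprime (cp*d1 - d2) p" by (simp only: cop_shift)
        thus ?thesis using cp2 cop_prime[OF p(2)] by simp
      qed
      moreover have "coprime c m'" unfolding e2 cop_shift using c'(1) .
      moreover have "coprime (c*d1 - d2) m'"
      proof -
        have "c*d1 - d2 = (c'*d1 - d2) + m' * (v * (cp - c') * d1)" by (subst e2) (simp add: algebra_simps)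
        hence "coprime (c*d1 - d2) m' \<longleftrightarrow> coprime (c'*d1 - d2) m'" by (simp only: cop_shift)
        thus ?thesis using c'(2) by simp
      qed
      ultimately show ?thesis using mm by auto
    qed
  qed
qed

lemma decomp2:
  fixes n :: int
  assumes "0 < n"
  shows "\<exists>k m. n = 2^k * m \<and> odd m \<and> 0 < m"
  using assms
proof (induction "nat n" arbitrary: n rule: less_induct)
  case less
  show ?case
  proof (cases "odd n")
    case True thus ?thesis using less.prems by (intro exI[of _ 0] exI[of _ n]) auto
  next
    case False
    then obtain n' where n': "n = 2 * n'" by auto
    have "0 < n'" "n' < n" using n' less.prems by auto
    then obtain k m where "n' = 2^k * m" "odd m" "0 < m" using less.hyps[of n'] by auto
    thus ?thesis using n' by (intro exI[of _ "Suc k"] exI[of _ m]) auto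
  qed
qed

theorem lemma4p2:
  fixes q d1 d2 :: int
  assumes "q \<ge> 2" and "d1 \<ge> 1" and "d2 \<ge> 1" and "gcd d1 d2 = 1"
  shows "\<exists>c::int. gcd c (q - 1) = 1 \<and>
           gcd (c * d1 - d2) (q - 1) = (if odd q \<and> odd d1 \<and> odd d2 then 2 else 1)"
proof -
  obtain k m where km: "q - 1 = 2^k * m" "odd m" "0 < m" using decomp2[of "q - 1"] assms(1) by auto
  have cd: "coprime d1 d2" using assms(4) by (simp add: coprime_iff_gcd_eq_1)
  obtain c1 where c1: "coprime c1 m" "coprime (c1*d1 - d2) m" using lemA[OF km(3) km(2) cd] by auto
  define c2 where "c2 = (if 4 dvd (d1 - d2) then 3 else (1::int))"
  have c4m: "coprime 4 m"
  proof -
    have "coprime m (2^2)" using coprime_power_right_iff[of m 2 2] km(2) coprime_right_2_iff_odd by blast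
    thus ?thesis by (simp add: coprime_commute)
  qed
  obtain u v where uv: "u * 4 + v * m = 1"
    using bezout_int[of 4 m] c4m by (auto simp: coprime_iff_gcd_eq_1)
  define c where "c = c1 * u * 4 + c2 * v * m"
  have vm: "v * m = 1 - u * 4" and up: "u * 4 = 1 - v * m" using uv by linarith+
  have "c = c1 * (u * 4) + c2 * v * m" unfolding c_def by (simp add: ac_simps)
  also have "\<dots> = c1 * (1 - v * m) + c2 * v * m" by (simp only: up)
  finally have e1: "c = c1 + m * (v * (c2 - c1))" by (simp add: algebra_simps)
  have "c = c1 * u * 4 + c2 * (v * m)" unfolding c_def by (simp add: ac_simps)
  also have "\<dots> = c1 * u * 4 + c2 * (1 - u * 4)" by (simp only: vm)
  finally have e2: "c = c2 + 4 * (u * (c1 - c2))" by (simp add: algebra_simps)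
  define x where "x = c * d1 - d2"
  have cm: "coprime c m" unfolding e1 cop_shift using c1(1) .
  have "x = (c1*d1 - d2) + m * (v * (c2 - c1) * d1)" unfolding x_def by (subst e1) (simp add: algebra_simps)
  hence "coprime x m \<longleftrightarrow> coprime (c1*d1 - d2) m" by (simp only: cop_shift)
  hence xm: "coprime x m" using c1(2) by simp
  have oc: "odd c" unfolding e2 c2_def by auto
  have cn: "coprime c (q - 1)" using cm oc km(1)
    by (simp add: coprime_power_right_iff coprime_right_2_iff_odd)
  have x4: "x = (c2*d1 - d2) + 4 * (u * (c1 - c2) * d1)" unfolding x_def by (subst e2) (simp add: algebra_simps)
  show ?thesis
  proof (intro exI[of _ c] conjI)
    show "gcd c (q - 1) = 1" using cn by (simp add: coprime_iff_gcd_eq_1)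
    show "gcd (c * d1 - d2) (q - 1) = (if odd q \<and> odd d1 \<and> odd d2 then 2 else 1)"
    proof (cases "odd q \<and> odd d1 \<and> odd d2")
      case True
      have k: "k \<noteq> 0" using True km(1) km(2) by (cases k) auto
      obtain y where y: "x = 2 * y" "odd y"
      proof (cases "4 dvd (d1 - d2)")
        case T4: True
        then obtain w where w: "d1 - d2 = 4 * w" by (auto elim: dvdE)
        have "x = 2 * (2 * w + d1 + 2 * (u * (c1 - c2) * d1))"
          using x4 w T4 unfolding c2_def by (simp add: algebra_simps)
        moreover have "odd (2 * w + d1 + 2 * (u * (c1 - c2) * d1))" using True by simp
        ultimately show ?thesis using that by blast
      next
        case F4: False
        have "even (d1 - d2)" using True by auto
        then obtain w where w: "d1 - d2 = 2 * w" by (rule evenE)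
        have ow: "odd w" using F4 w by auto
        have "x = 2 * (w + 2 * (u * (c1 - c2) * d1))"
          using x4 w F4 unfolding c2_def by (simp add: algebra_simps)
        moreover have "odd (w + 2 * (u * (c1 - c2) * d1))" using ow by simp
        ultimately show ?thesis using that by blast
      qed
      have ym: "coprime y m" using xm y(1) by simp
      have "coprime y (2^(k-1) * m)" using ym y(2)
        by (simp add: coprime_power_right_iff coprime_right_2_iff_odd)
      hence g1: "gcd y (2^(k-1) * m) = 1" by (simp add: coprime_iff_gcd_eq_1)
      have "q - 1 = 2 * (2^(k-1) * m)" using km(1) k by (cases k) auto
      hence "gcd x (q - 1) = \<bar>2\<bar> * gcd y (2^(k-1) * m)" using y(1) gcd_mult_distrib_int[of 2 y "2^(k-1)*m"] by simp
      thus ?thesis using g1 True x_def by simp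
    next
      case False
      have "coprime x (q - 1)"
      proof (cases k)
        case 0 thus ?thesis using xm km(1) by simp
      next
        case (Suc j)
        hence "q = 2 * (2^j * m) + 1" using km(1) by simp
        hence "odd q" by simp
        hence "\<not> (odd d1 \<and> odd d2)" using False by auto
        moreover have "\<not> (even d1 \<and> even d2)" using cd by auto
        ultimately have "odd x" unfolding x_def using oc by auto
        thus ?thesis using xm km(1) by (simp add: coprime_power_right_iff coprime_right_2_iff_odd)
      qed
      thus ?thesis using False x_def by (simp add: coprime_iff_gcd_eq_1)
    qed
  qed
qed

end
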